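(* Let $L\ge 2$, $\lambda>0$, $d_{\min}>0$, let ${\bf q}_r\in\mathbb{R}^3$ and ${\cal C}\subseteq\mathbb{R}^3$, and let ${\bm\kappa}_k,{\bm\kappa}_{k'}\in\mathbb{R}^3$ be unit vectors with ${\bm\kappa}_k\neq{\bm\kappa}_{k'}$. Consider the problem $$\min_{{\bf q}_1,\dots,{\bf q}_L\in\mathbb{R}^3}\ \xi({\bf q}_1,\dots,{\bf q}_L):=\frac{1}{L^2}\Big|\sum_{l=1}^L e^{\,\mathrm{j}\frac{2\pi}{\lambda}({\bm\kappa}_k-{\bm\kappa}_{k'})^T{\bf q}_l}\Big|^2$$ subject to ${\bf q}_r+{\bf q}_l\in{\cal C}$ for all $l$ and $\|{\bf q}_l-{\bf q}_{l'}\|\ge d_{\min}$ for all $l\neq l'$. Let $\nu_{\min}=\big\lceil L d_{\min}\|{\bm\kappa}_k-{\bm\kappa}_{k'}\|/\lambda-1\big\rceil$ and $$\varsigma^\star=\begin{cases}\nu_{\min}/L, & \text{if } \mathrm{mod}(\nu_{\min}+1,L)\neq 0,\\ (\nu_{\min}+1)/L, & \text{otherwise.}\end{cases}$$ For an arbitrary ${\bf q}_1\in\mathbb{R}^3$ define $${\bf q}_l={\bf q}_1+(l-1)\frac{(\varsigma^\star+1/L)\lambda}{\|{\bm\kappa}_k-{\bm\kappa}_{k'}\|^2}({\bm\kappa}_k-{\bm\kappa}_{k'}),\quad l=1,\dots,L.$$ Then $\xi({\bf q}_1,\dots,{\bf q}_L)=0$ and $\|{\bf q}_l-{\bf q}_{l'}\|\ge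 d_{\min}$ for all $l\neq l'$. Consequently, whenever ${\bf q}_1$ is such that ${\bf q}_r+{\bf q}_l\in{\cal C}$ for all $l$, these positions form an optimal solution of the problem, achieving objective value zero.
   Context: $\mathrm{j}$ denotes the imaginary unit; $\lceil\cdot\rceil$ is the ceiling function; $\mathrm{mod}(a,b)$ is the remainder of integer $a$ divided by $b$. The quantity $\xi$ is the squared correlation coefficient between the far-field (uniform plane wave) channels of two users with propagation directions ${\bm\kappa}_k,{\bm\kappa}_{k'}$ received by $L$ single-antenna UAVs at positions ${\bf q}_l$ (relative to a reference point ${\bf q}_r$), ${\cal C}$ is the UAV movable region and $d_{\min}$ the minimum safe inter-UAV distance. *)

theory Defs
  imports "HOL-Analysis.Analysis"
begin

text \<open>UAV positions are functions q :: nat \<Rightarrow> real^3, only the values at indices 1..L matter.\<close>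

definition xi :: "real \<Rightarrow> real^3 \<Rightarrow> real^3 \<Rightarrow> nat \<Rightarrow> (nat \<Rightarrow> real^3) \<Rightarrow> real" where
  "xi lam ka kb L q =
     (1 / (real L)^2) *
     (cmod (\<Sum>l=1..L. exp (\<i> * complex_of_real (2 * pi / lam * ((ka - kb) \<bullet> q l)))))^2"

definition feasible :: "(real^3) set \<Rightarrow> real^3 \<Rightarrow> real \<Rightarrow> nat \<Rightarrow> (nat \<Rightarrow> real^3) \<Rightarrow> bool" where
  "feasible C qr dmin L q \<longleftrightarrow>
     (\<forall>l\<in>{1..L}. qr + q l \<in> C) \<and>
     (\<forall>l\<in>{1..L}. \<forall>l'\<in>{1..L}. l \<noteq> l' \<longrightarrow> norm (q l - q l') \<ge> dmin)"

definition optimal :: "(real^3) set \<Rightarrow> real^3 \<Rightarrow> real \<Rightarrow> real \<Rightarrow> real^3 \<Rightarrow> real^3 \<Rightarrow> nat \<Rightarrow> (nat \<Rightarrow> real^3) \<Rightarrow> bool" where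
  "optimal C qr dmin lam ka kb L q \<longleftrightarrow>
     feasible C qr dmin L q \<and>
     (\<forall>p. feasible C qr dmin L p \<longrightarrow> xi lam ka kb L q \<le> xi lam ka kb L p)"

definition nu_min :: "nat \<Rightarrow> real \<Rightarrow> real \<Rightarrow> real^3 \<Rightarrow> real^3 \<Rightarrow> int" where
  "nu_min L dmin lam ka kb = \<lceil>real L * dmin * norm (ka - kb) / lam - 1\<rceil>"

definition varsigma_star :: "nat \<Rightarrow> real \<Rightarrow> real \<Rightarrow> real^3 \<Rightarrow> real^3 \<Rightarrow> real" where
  "varsigma_star L dmin lam ka kb =
     (let \<nu> = nu_min L dmin lam ka kb in
      if (\<nu> + 1) mod int L \<noteq> 0 then real_of_int \<nu> / real L
      else real_of_int (\<nu> + 1) / real L)"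

definition positions :: "nat \<Rightarrow> real \<Rightarrow> real \<Rightarrow> real^3 \<Rightarrow> real^3 \<Rightarrow> real^3 \<Rightarrow> nat \<Rightarrow> real^3" where
  "positions L dmin lam ka kb q1 l =
     q1 + ((real l - 1) * ((varsigma_star L dmin lam ka kb + 1 / real L) * lam
             / (norm (ka - kb))^2)) *\<^sub>R (ka - kb)"

end

theory Submission
  imports Defs
begin

lemma root_sum_zero:
  fixes L m :: nat
  assumes "L \<ge> 1" "\<not> L dvd m"
  shows "(\<Sum>k<L. exp (2 * complex_of_real pi * \<i> * of_nat m / of_nat L) ^ k) = 0"
proof -
  let ?w = "exp (2 * complex_of_real pi * \<i> * of_nat m / of_nat L)"
  have ne: "?w \<noteq> 1" using complex_root_unity_eq_1[OF assms(1)] assms(2) by simp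
  have "?w ^ L = exp (of_nat L * (2 * complex_of_real pi * \<i> * of_nat m / of_nat L))"
    by (rule exp_of_nat_mult[symmetric])
  also have "\<dots> = exp (2 * complex_of_real pi * \<i> * of_nat m / of_nat 1)"
    using assms(1) by simp
  also have "\<dots> = 1" using complex_root_unity_eq_1[of 1 m] by simp
  finally have "?w ^ L = 1" .
  then show ?thesis using ne by (simp add: sum_gp_strict)
qed

theorem theorem1:
  fixes L :: nat and lam dmin :: real and qr q1 ka kb :: "real^3" and C :: "(real^3) set"
  assumes "L \<ge> 2" and "lam > 0" and "dmin > 0"
    and "norm ka = 1" and "norm kb = 1" and "ka \<noteq> kb"
  shows "xi lam ka kb L (positions L dmin lam ka kb q1) = 0
    \<and> (\<forall>l\<in>{1..L}. \<forall>l'\<in>{1..L}. l \<noteq> l' \<longrightarrow>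
         norm (positions L dmin lam ka kb q1 l - positions L dmin lam ka kb q1 l') \<ge> dmin)
    \<and> ((\<forall>l\<in>{1..L}. qr + positions L dmin lam ka kb q1 l \<in> C) \<longrightarrow>
         optimal C qr dmin lam ka kb L (positions L dmin lam ka kb q1))"
proof -
  define d where "d = ka - kb"
  define D where "D = norm d"
  have Dpos: "D > 0" using assms(6) unfolding D_def d_def by simp
  define nu where "nu = nu_min L dmin lam ka kb"
  define s where "s = varsigma_star L dmin lam ka kb + 1 / real L"
  have Lpos: "real L > 0" using assms(1) by simp
  have x0: "real L * dmin * D / lam > 0" using Lpos Dpos assms(2,3) by simp
  have nu_ge: "real L * dmin * D / lam - 1 \<le> of_int nu"
    unfolding nu_def nu_min_def D_def d_def by (rule le_of_int_ceiling)
  have nu0: "nu \<ge> 0"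
  proof -
    have "-1 < (of_int nu :: real)" using nu_ge x0 by linarith
    then show ?thesis by simp
  qed
  obtain m :: nat where m: "real L * s = real m" "m \<ge> 1" "\<not> L dvd m"
    "real L * dmin * D / lam \<le> real m"
  proof (cases "(nu + 1) mod int L \<noteq> 0")
    case True
    have "s = (of_int nu + 1) / real L"
      using True Lpos unfolding s_def varsigma_star_def nu_def[symmetric] Let_def
      by (simp add: field_simps)
    then have e: "real L * s = real (nat (nu + 1))" using Lpos nu0 by simp
    have nd: "\<not> L dvd nat (nu + 1)"
    proof
      assume "L dvd nat (nu + 1)"
      then have "int L dvd int (nat (nu+1))" by (simp only: int_dvd_int_iff)
      then have "int L dvd nu + 1" using nu0 by simp
      then show False using True by simp
    qed
    have le: "real L * dmin * D / lam \<le> real (nat (nu + 1))" using nu_ge nu0 by simp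
    have ge1: "nat (nu + 1) \<ge> 1" using nu0 by simp
    show ?thesis by (rule that[OF e ge1 nd le])
  next
    case False
    have "s = (of_int nu + 2) / real L"
      using False Lpos unfolding s_def varsigma_star_def nu_def[symmetric] Let_def
      by (simp add: field_simps)
    then have e: "real L * s = real (nat (nu + 2))" using Lpos nu0 by simp
    have nd: "\<not> L dvd nat (nu + 2)"
    proof
      assume "L dvd nat (nu + 2)"
      then have "int L dvd int (nat (nu+2))" by (simp only: int_dvd_int_iff)
      then have "int L dvd nu + 2" using nu0 by simp
      moreover have "int L dvd nu + 1" using False by auto
      ultimately have "int L dvd 1"
        by (metis add_diff_cancel_left' dvd_diff one_add_one add.assoc add.commute)
      then show False using assms(1) by simp
    qed
    have le: "real L * dmin * D / lam \<le> real (nat (nu + 2))" using nu_ge nu0 by simp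
    have ge1: "nat (nu + 2) \<ge> 1" using nu0 by simp
    show ?thesis by (rule that[OF e ge1 nd le])
  qed
  define c where "c = s * lam / D^2"
  have pos: "\<And>l. positions L dmin lam ka kb q1 l = q1 + ((real l - 1) * c) *\<^sub>R d"
    unfolding positions_def c_def s_def D_def d_def by simp
  have "real L * s > 0" using m(1,2) by simp
  then have spos: "s > 0" using Lpos by (simp add: zero_less_mult_iff)
  have sd: "s * lam / D \<ge> dmin"
  proof -
    have "real L * (dmin * D / lam) \<le> real L * s" using m(1,4) by (simp only: times_divide_eq_right mult.assoc)
    then have "dmin * D / lam \<le> s" using mult_le_cancel_left_pos[OF Lpos] by blast
    then show ?thesis using Dpos assms(2) by (simp add: field_simps)
  qed
  have dist: "\<forall>l\<in>{1..L}. \<forall>l'\<in>{1..L}. l \<noteq> l' \<longrightarrow>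
         norm (positions L dmin lam ka kb q1 l - positions L dmin lam ka kb q1 l') \<ge> dmin"
  proof (intro ballI impI)
    fix l l' assume "l \<in> {1..L}" "l' \<in> {1..L}" "l \<noteq> l'"
    have "positions L dmin lam ka kb q1 l - positions L dmin lam ka kb q1 l'
        = ((real l - real l') * c) *\<^sub>R d" unfolding pos by (simp add: algebra_simps)
    then have "norm (positions L dmin lam ka kb q1 l - positions L dmin lam ka kb q1 l')
        = \<bar>real l - real l'\<bar> * c * D"
      using spos assms(2) Dpos by (simp add: c_def D_def abs_mult)
    also have "\<dots> = \<bar>real l - real l'\<bar> * (s * lam / D)"
      using Dpos by (simp add: c_def power2_eq_square)
    also have "\<dots> \<ge> 1 * (s * lam / D)"
      apply (rule mult_right_mono)
      using \<open>l \<noteq> l'\<close> spos assms(2) Dpos by auto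
    finally show "norm (positions L dmin lam ka kb q1 l - positions L dmin lam ka kb q1 l') \<ge> dmin"
      using sd by simp
  qed
  define th where "th = 2 * pi / lam * (d \<bullet> q1)"
  define w where "w = exp (2 * complex_of_real pi * \<i> * of_nat m / of_nat L)"
  have hterm: "exp (\<i> * complex_of_real (2 * pi / lam * ((ka - kb) \<bullet> positions L dmin lam ka kb q1 l)))
      = exp (\<i> * complex_of_real th) * w ^ (l - 1)" if "l \<ge> 1" for l
  proof -
    have dd: "d \<bullet> d = D^2" unfolding D_def by (simp add: power2_norm_eq_inner)
    have "2 * pi / lam * ((ka - kb) \<bullet> positions L dmin lam ka kb q1 l)
        = th + real (l - 1) * (2 * pi * real m / real L)"
    proof -
      have "2 * pi / lam * ((ka - kb) \<bullet> positions L dmin lam ka kb q1 l)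
          = th + 2 * pi / lam * ((real l - 1) * c * D^2)"
        unfolding pos th_def d_def[symmetric] by (simp add: inner_add_right dd algebra_simps)
      also have "(real l - 1) * c * D^2 = real (l - 1) * s * lam"
        using that Dpos by (simp add: c_def of_nat_diff)
      also have "s = real m / real L" using m(1) Lpos by (simp add: field_simps)
      finally show ?thesis using assms(2) by (simp add: field_simps)
    qed
    then have "exp (\<i> * complex_of_real (2 * pi / lam * ((ka - kb) \<bullet> positions L dmin lam ka kb q1 l)))
        = exp (\<i> * complex_of_real th + of_nat (l - 1) * (2 * complex_of_real pi * \<i> * of_nat m / of_nat L))"
      by (simp add: algebra_simps)
    also have "\<dots> = exp (\<i> * complex_of_real th) * w ^ (l - 1)"
      unfolding w_def by (simp only: exp_add exp_of_nat_mult)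
    finally show ?thesis .
  qed
  have sum0: "(\<Sum>l=1..L. exp (\<i> * complex_of_real (2 * pi / lam * ((ka - kb) \<bullet> positions L dmin lam ka kb q1 l)))) = 0"
  proof -
    have "(\<Sum>l=1..L. exp (\<i> * complex_of_real (2 * pi / lam * ((ka - kb) \<bullet> positions L dmin lam ka kb q1 l))))
        = (\<Sum>l=1..L. exp (\<i> * complex_of_real th) * w ^ (l - 1))"
      by (rule sum.cong) (rule refl, rule hterm, simp)
    also have "\<dots> = (\<Sum>k<L. exp (\<i> * complex_of_real th) * w ^ k)"
      by (simp add: sum.atLeast1_atMost_eq)
    also have "\<dots> = exp (\<i> * complex_of_real th) * (\<Sum>k<L. w ^ k)"
      by (simp add: sum_distrib_left)
    also have "(\<Sum>k<L. w ^ k) = 0" unfolding w_def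
      using root_sum_zero[of L m] m(3) assms(1) by simp
    finally show ?thesis by simp
  qed
  have xi0: "xi lam ka kb L (positions L dmin lam ka kb q1) = 0"
    unfolding xi_def sum0 by simp
  have xinn: "\<And>p. xi lam ka kb L p \<ge> 0" unfolding xi_def by simp
  show ?thesis
    using xi0 dist xinn unfolding optimal_def feasible_def by simp
qed

end
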